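(* For every integer $n\ge 2$, $$F(D_n)=\tau(n)+\pi(n-1)-\pi\!\left(\tfrac n2\right)+\gamma_{n/2}(n).$$ In particular, if $n$ is prime, $F(D_n)=\pi(n)-\pi\!\left(\tfrac n2\right)+1$.
   Context: $D_n$ is the graph with vertex set $\{1,\dots,n\}$ in which distinct $a,b$ are adjacent iff $\gcd(a,b)\mid n$ (the maximal Diophantine graph of order $n$). $F(G)$ is the number of vertices of degree $n-1$ in a graph $G$ of order $n$. $\pi(x)$ is the number of primes $\le x$, $\tau(n)$ the number of positive divisors of $n$. For a prime $p$, $\acute v_p(n):=v_p(n)+1$, where $v_p$ is the $p$-adic valuation. For a real $0<x<n$, $\gamma_x(n):=\left|\{p^{\acute v_p(n)} : p \text{ prime},\ p\mid n,\ x<p^{\acute v_p(n)}<n\}\right|$. *)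

theory Defs
  imports Complex_Main "HOL-Computational_Algebra.Primes"
begin

definition graph_degree :: "'a set \<Rightarrow> ('a \<Rightarrow> 'a \<Rightarrow> bool) \<Rightarrow> 'a \<Rightarrow> nat" where
  "graph_degree V E v = card {u \<in> V. E v u}"

definition F_full :: "'a set \<Rightarrow> ('a \<Rightarrow> 'a \<Rightarrow> bool) \<Rightarrow> nat" where
  "F_full V E = card {v \<in> V. graph_degree V E v = card V - 1}"

definition D_vertices :: "nat \<Rightarrow> nat set" where
  "D_vertices n = {1..n}"

definition D_adj :: "nat \<Rightarrow> nat \<Rightarrow> nat \<Rightarrow> bool" where
  "D_adj n a b \<longleftrightarrow> a \<noteq> b \<and> gcd a b dvd n"

definition prime_pi :: "real \<Rightarrow> nat" where
  "prime_pi x = card {p :: nat. prime p \<and> real p \<le> x}"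

definition vacute :: "nat \<Rightarrow> nat \<Rightarrow> nat" where
  "vacute p n = multiplicity p n + 1"

definition gamma_fn :: "real \<Rightarrow> nat \<Rightarrow> nat" where
  "gamma_fn x n = card {q :: nat. \<exists>p. prime p \<and> p dvd n \<and> q = p ^ vacute p n
                          \<and> x < real q \<and> q < n}"

end

theory Submission
  imports Defs
begin

lemma full_iff:
  assumes v: "v \<in> {1..n}"
  shows "graph_degree (D_vertices n) (D_adj n) v = card (D_vertices n) - 1
         \<longleftrightarrow> (\<forall>u\<in>{1..n}. u \<noteq> v \<longrightarrow> gcd v u dvd n)"
proof -
  have sub: "{u \<in> {1..n}. D_adj n v u} \<subseteq> {1..n} - {v}" unfolding D_adj_def by auto
  have c: "card ({1..n} - {v}) = n - 1" using v by simp
  have "graph_degree (D_vertices n) (D_adj n) v = card (D_vertices n) - 1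
        \<longleftrightarrow> {u \<in> {1..n}. D_adj n v u} = {1..n} - {v}"
  proof
    assume "graph_degree (D_vertices n) (D_adj n) v = card (D_vertices n) - 1"
    hence "card {u \<in> {1..n}. D_adj n v u} = card ({1..n} - {v})"
      using c by (simp add: graph_degree_def D_vertices_def)
    thus "{u \<in> {1..n}. D_adj n v u} = {1..n} - {v}"
      using sub by (intro card_subset_eq) auto
  next
    assume "{u \<in> {1..n}. D_adj n v u} = {1..n} - {v}"
    thus "graph_degree (D_vertices n) (D_adj n) v = card (D_vertices n) - 1"
      using c by (simp add: graph_degree_def D_vertices_def)
  qed
  also have "\<dots> \<longleftrightarrow> (\<forall>u\<in>{1..n}. u \<noteq> v \<longrightarrow> gcd v u dvd n)"
    unfolding D_adj_def by auto
  finally show ?thesis .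
qed

lemma gcd_ne_self:
  fixes u v n :: nat
  assumes "n < 2*v" "u \<in> {1..n}" "u \<noteq> v"
  shows "gcd v u \<noteq> v"
proof
  assume "gcd v u = v"
  hence "v dvd u" by (metis gcd_dvd2)
  then obtain k where "u = v*k" by blast
  with assms show False
    by (cases k; cases "k - 1") (auto simp: algebra_simps)
qed

lemma dvd_half:
  fixes v n :: nat
  assumes "v dvd n" "v < n"
  shows "2*v \<le> n"
proof -
  obtain k where k: "n = v*k" using assms(1) by blast
  have "k \<noteq> 0" "k \<noteq> 1" using k assms(2) by auto
  hence "2 \<le> k" by linarith
  hence "v*2 \<le> v*k" by (rule mult_le_mono2)
  thus ?thesis using k by simp
qed

lemma char:
  fixes n v :: nat
  assumes n: "n \<ge> 2" and v: "v \<in> {1..n}"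
  shows "(\<forall>u\<in>{1..n}. u \<noteq> v \<longrightarrow> gcd v u dvd n) \<longleftrightarrow>
         v dvd n \<or> (\<exists>p. prime p \<and> v = p ^ (multiplicity p n + 1) \<and> n < 2*v \<and> v < n)"
proof
  assume full: "\<forall>u\<in>{1..n}. u \<noteq> v \<longrightarrow> gcd v u dvd n"
  show "v dvd n \<or> (\<exists>p. prime p \<and> v = p ^ (multiplicity p n + 1) \<and> n < 2*v \<and> v < n)"
  proof (cases "v dvd n")
    case False
    then obtain p where p: "prime p" "\<not> multiplicity p v \<le> multiplicity p n"
      using multiplicity_le_imp_dvd[of v n] v by force
    define q where "q = p ^ (multiplicity p n + 1)"
    have qv: "q dvd v" unfolding q_def using p(2) by (intro multiplicity_dvd') simp
    have qn: "\<not> q dvd n" unfolding q_def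
      using p(1) n by (subst power_dvd_iff_le_multiplicity) (auto simp: prime_gt_1_nat)
    have qle: "q \<le> v" using qv v by (intro dvd_imp_le) auto
    have qpos: "q \<ge> 1" unfolding q_def using p(1) prime_gt_0_nat
      by (simp add: Suc_leI)
    have "q = v"
    proof (rule ccontr)
      assume "q \<noteq> v"
      hence "gcd v q dvd n" using full qle qpos v by auto
      moreover have "gcd v q = q" using qv by (simp add: gcd_nat.absorb2)
      ultimately show False using qn by simp
    qed
    have "n < 2*v"
    proof (rule ccontr)
      assume "\<not> n < 2*v"
      moreover have "2*v \<noteq> v" "1 \<le> 2*v" using v by auto
      ultimately have "2*v \<in> {1..n}" "2*v \<noteq> v" by auto
      hence "gcd v (2*v) dvd n" using full by blast
      thus False using False by simp
    qed
    moreover have "v < n" using v False by (cases "v = n") auto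
    ultimately show ?thesis using p(1) `q = v` q_def by blast
  qed simp
next
  assume h: "v dvd n \<or> (\<exists>p. prime p \<and> v = p ^ (multiplicity p n + 1) \<and> n < 2*v \<and> v < n)"
  show "\<forall>u\<in>{1..n}. u \<noteq> v \<longrightarrow> gcd v u dvd n"
  proof (intro ballI impI)
    fix u assume u: "u \<in> {1..n}" "u \<noteq> v"
    show "gcd v u dvd n"
    proof (cases "v dvd n")
      case True
      thus ?thesis by (meson dvd_trans gcd_dvd1)
    next
      case False
      then obtain p where p: "prime p" "v = p ^ (multiplicity p n + 1)" "n < 2*v"
        using h by blast
      have "gcd v u dvd p ^ (multiplicity p n + 1)" using p(2) by simp
      then obtain i where i: "i \<le> multiplicity p n + 1" "gcd v u = p ^ i"
        using divides_primepow_nat[OF p(1)] by blast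
      have "i \<noteq> multiplicity p n + 1" using gcd_ne_self[OF p(3) u] i p(2) by auto
      hence "i \<le> multiplicity p n" using i by simp
      thus ?thesis using i(2) by (simp add: multiplicity_dvd')
    qed
  qed
qed

theorem mainTheorem6:
  fixes n :: nat
  assumes "n \<ge> 2"
  shows "int (F_full (D_vertices n) (D_adj n)) =
           int (card {d. d dvd n}) + int (prime_pi (real n - 1)) - int (prime_pi (real n / 2))
           + int (gamma_fn (real n / 2) n)
       \<and> (prime n \<longrightarrow>
           int (F_full (D_vertices n) (D_adj n)) =
             int (prime_pi (real n)) - int (prime_pi (real n / 2)) + 1)"
proof -
  define A where "A = {d. d dvd n}"
  define B where "B = {p::nat. prime p \<and> n < 2*p \<and> p \<le> n - 1}"
  define C where "C = {q :: nat. \<exists>p. prime p \<and> p dvd n \<and> q = p ^ vacute p n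
                          \<and> real n / 2 < real q \<and> q < n}"
  have n0: "n > 0" using assms by simp
  have C': "C = {q. \<exists>p. prime p \<and> p dvd n \<and> q = p ^ (multiplicity p n + 1) \<and> n < 2*q \<and> q < n}"
    proof -
    have eq: "\<And>q::nat. (real n / 2 < real q) = (n < 2*q)"
    proof -
      fix q :: nat
      have "(real n / 2 < real q) = (real n < 2 * real q)" by linarith
      also have "\<dots> = (real n < real (2*q))" by simp
      finally have "(real n / 2 < real q) = (real n < real (2*q))" .
      thus "(real n / 2 < real q) = (n < 2*q)" by (simp only: of_nat_less_iff)
    qed
    show ?thesis unfolding C_def vacute_def by (simp only: eq)
  qed
  have S: "{v \<in> D_vertices n. graph_degree (D_vertices n) (D_adj n) v = card (D_vertices n) - 1}
           = A \<union> B \<union> C"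
  proof (intro equalityI subsetI)
    fix v assume "v \<in> {v \<in> D_vertices n. graph_degree (D_vertices n) (D_adj n) v = card (D_vertices n) - 1}"
    hence v: "v \<in> {1..n}" and "v dvd n \<or> (\<exists>p. prime p \<and> v = p ^ (multiplicity p n + 1) \<and> n < 2*v \<and> v < n)"
      using full_iff char assms unfolding D_vertices_def by auto
    thus "v \<in> A \<union> B \<union> C"
    proof (elim disjE exE conjE)
      fix p assume p: "prime p" "v = p ^ (multiplicity p n + 1)" "n < 2*v" "v < n"
      show ?thesis
      proof (cases "p dvd n")
        case True thus ?thesis using p unfolding C' by blast
      next
        case False
        hence "multiplicity p n = 0" by (simp add: not_dvd_imp_multiplicity_0)
        thus ?thesis using p unfolding B_def by auto
      qed
    qed (auto simp: A_def)
  next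
    fix v assume "v \<in> A \<union> B \<union> C"
    hence v: "v \<in> {1..n}" and "v dvd n \<or> (\<exists>p. prime p \<and> v = p ^ (multiplicity p n + 1) \<and> n < 2*v \<and> v < n)"
    proof -
      from \<open>v \<in> A \<union> B \<union> C\<close> show "v \<in> {1..n}"
        unfolding A_def B_def C'
        using n0 prime_gt_0_nat dvd_imp_le
        by (auto simp: Suc_le_eq dvd_pos_nat)
      from \<open>v \<in> A \<union> B \<union> C\<close> show "v dvd n \<or> (\<exists>p. prime p \<and> v = p ^ (multiplicity p n + 1) \<and> n < 2*v \<and> v < n)"
      proof (elim UnE)
        assume "v \<in> B"
        hence "prime v" "n < 2*v" "v < n" unfolding B_def using assms by auto
        moreover have "\<not> v dvd n"
        proof
          assume "v dvd n"
          with dvd_half[of v n] \<open>n < 2*v\<close> \<open>v < n\<close> show False by linarith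
        qed
        hence "multiplicity v n = 0" by (simp add: not_dvd_imp_multiplicity_0)
        ultimately show ?thesis by auto
      qed (auto simp: A_def C')
    qed
    thus "v \<in> {v \<in> D_vertices n. graph_degree (D_vertices n) (D_adj n) v = card (D_vertices n) - 1}"
      using full_iff char assms unfolding D_vertices_def by auto
  qed
  have fA: "finite A" unfolding A_def using n0 by simp
  have fB: "finite B" unfolding B_def by (rule finite_subset[of _ "{..n}"]) auto
  have fC: "finite C" unfolding C' by (rule finite_subset[of _ "{..n}"]) auto
  have AB: "A \<inter> B = {}"
  proof -
    { fix v assume "v \<in> B" "v dvd n"
      hence "n < 2*v" "v < n" unfolding B_def using assms by auto
      with dvd_half[of v n] \<open>v dvd n\<close> have False by linarith }
    thus ?thesis unfolding A_def by auto
  qed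
  have AC: "A \<inter> C = {}"
  proof -
    { fix p assume p: "prime p" "p ^ (multiplicity p n + 1) dvd n"
      have "multiplicity p n + 1 \<le> multiplicity p n"
        using p n0 by (subst (asm) power_dvd_iff_le_multiplicity) (auto simp: prime_gt_1_nat)
      hence False by simp }
    thus ?thesis unfolding A_def C' by blast
  qed
  have BC: "B \<inter> C = {}"
  proof -
    { fix p assume p: "prime p" "p dvd n" "prime (p ^ (multiplicity p n + 1))"
      have "multiplicity p n \<ge> 1" using p(2) n0 p(1)
        using multiplicity_eq_zero_iff[of n p] not_prime_unit[of p] prime_gt_1_nat[of p] by (auto simp: Suc_le_eq)
      then obtain m where m: "multiplicity p n = Suc m" by (cases "multiplicity p n") auto
      have "p ^ (multiplicity p n + 1) = p * p^(m+1)" using m by simp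
      hence "prime (p * p^(m+1))" using p(3) by metis
      hence "p = 1 \<or> p^(m+1) = 1" using prime_product by blast
      moreover have "p > 1" using p(1) prime_gt_1_nat by blast
      ultimately have False by (simp add: power_eq_1_iff) }
    thus ?thesis unfolding B_def C' by blast
  qed
  have F: "F_full (D_vertices n) (D_adj n) = card A + card B + card C"
    unfolding F_full_def S using fA fB fC AB AC BC
    by (simp add: card_Un_disjoint Int_Un_distrib2)
  have gam: "gamma_fn (real n / 2) n = card C" unfolding gamma_fn_def C_def ..
  have pi1: "prime_pi (real n - 1) = card {p. prime p \<and> 2*p \<le> n} + card B"
  proof -
    have e: "{p::nat. prime p \<and> real p \<le> real n - 1} = {p. prime p \<and> 2*p \<le> n} \<union> B"
      unfolding B_def using assms by auto
    show ?thesis unfolding prime_pi_def e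
      by (rule card_Un_disjoint) (auto simp: fB B_def intro: finite_subset[of _ "{..n}"])
  qed
  have pi2: "prime_pi (real n / 2) = card {p. prime p \<and> 2*p \<le> n}"
    unfolding prime_pi_def by (rule arg_cong[where f=card]) (auto simp: field_simps)
  have part1: "int (F_full (D_vertices n) (D_adj n)) =
           int (card {d. d dvd n}) + int (prime_pi (real n - 1)) - int (prime_pi (real n / 2))
           + int (gamma_fn (real n / 2) n)"
    using F gam pi1 pi2 A_def by simp
  have part2: "int (F_full (D_vertices n) (D_adj n)) =
             int (prime_pi (real n)) - int (prime_pi (real n / 2)) + 1" if pn: "prime n"
  proof -
    have cA: "card {d. d dvd n} = 2"
    proof -
      have "{d. d dvd n} = {1, n}" using pn by (auto simp: prime_nat_iff)
      thus ?thesis using assms by simp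
    qed
    have cC: "gamma_fn (real n / 2) n = 0"
    proof -
      have "C = {}"
      proof -
        { fix p assume "prime p" "p dvd n" "p ^ (multiplicity p n + 1) < n"
          hence "p = n" using pn by (metis prime_nat_iff prime_gt_1_nat less_irrefl)
          moreover have "p \<le> p ^ (multiplicity p n + 1)"
            using \<open>prime p\<close> prime_gt_1_nat[of p] by (intro self_le_power) auto
          ultimately have False using \<open>p ^ (multiplicity p n + 1) < n\<close> by simp }
        thus ?thesis unfolding C' by blast
      qed
      thus ?thesis using gam by simp
    qed
    have pi3: "prime_pi (real n) = prime_pi (real n - 1) + 1"
    proof -
      have e: "{p::nat. prime p \<and> real p \<le> real n} = insert n {p. prime p \<and> real p \<le> real n - 1}"
        using pn by auto
      have f: "finite {p::nat. prime p \<and> real p \<le> real n - 1}"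
        by (rule finite_subset[of _ "{..n}"]) auto
      show ?thesis unfolding prime_pi_def e using f by simp
    qed
    show ?thesis using part1 cA cC pi3 by simp
  qed
  show ?thesis using part1 part2 by blast
qed

end
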